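(* Assume the setup below, the continuity condition, and the summability condition $\sup_{i\in\mathbb{Z}^d}\sum_{k\ge 0}|V_i(k)|\,\lambda_i(k)<+\infty$. Then for every site $i\in\mathbb{Z}^d$ and every $k\ge -1$ there exists a family of probability distributions $p_i^{[k]}(\cdot\mid w)$ on $A$, indexed by local configurations $w\in A^{V_i(k)}$ (for $k=-1$ this is a single probability distribution $p_i^{[-1]}(\cdot)$ on $A$), such that for all $a\in A$ and $\eta\in A^{\mathbb{Z}^d}$ $$c_i(a,\eta)=M_i\,p_i(a\mid\eta),\qquad p_i(a\mid\eta)=\sum_{k\ge -1}\lambda_i(k)\,p_i^{[k]}\big(a\mid \eta(V_i(k))\big).$$ Consequently, for every cylinder function $f$, $$Lf(\eta)=\sum_{i\in\mathbb{Z}^d}\sum_{a\in A}\sum_{k\ge -1}M_i\,\lambda_i(k)\,p_i^{[k]}\big(a\mid\eta(V_i(k))\big)\,[f(\eta^{i,a})-f(\eta)],$$ where $L$ is the generator defined below.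
   Context: Setup. Let $A$ be a finite set (colors) and $d\ge1$. Configurations are elements $\eta\in A^{\mathbb{Z}^d}$; for $V\subset\mathbb{Z}^d$, $\eta(V)\in A^V$ is the restriction. For $i\in\mathbb{Z}^d$, $a\in A$, $\eta^{i,a}$ denotes the configuration equal to $\eta$ off $i$ and equal to $a$ at $i$. Let $\|j\|=\sum_{u=1}^d|j_u|$, $V_i(k)=\{j\in\mathbb{Z}^d:\|j-i\|\le k\}$ for $k\ge0$, and $V_i(-1)=\emptyset$. For each $i$, $\eta$ and $a\neq\eta(i)$ a number $c_i(a,\eta)>0$ is given with $c_i(a,\eta)\le\Gamma_i<\infty$. For each $i$ a constant $0<M_i<\infty$ is fixed with $\sum_{a\ne\eta(i)}c_i(a,\eta)\le M_i$ for all $\eta$ (e.g. $M_i=|A|\Gamma_i$), and one sets $c_i(\eta(i),\eta)=M_i-\sum_{a\neq\eta(i)}c_i(a,\eta)$; thus $p_i(a\mid\eta):=c_i(a,\eta)/M_i$ is a probability distribution on $A$ for each $\eta$. Continuity condition: for every $a\in A$, $\sup_{i}\sup\{|c_i(a,\eta)-c_i(a,\zeta)|:\eta(V_i(k))=\zeta(V_i(k))\}\to0$ as $k\to\infty$. Define $$\alpha_i(-1)=\sum_{a\in A}\min\Big(\inf_{\zeta:\zeta(i)\ne a}c_i(a,\zeta),\;M_i-\sup_{\zeta:\zeta(i)=a}\sum_{b\ne a}c_i(b,\zeta)\Big),$$ and for $k\ge0$ $$\alpha_i(k)=\min_{w\in A^{V_i(k)}}\Big(\sum_{a\ne w(i)}\inf_{\zeta:\zeta(V_i(k))=w}c_i(a,\zeta)+M_i-\sup_{\zeta:\zeta(V_i(k))=w}\sum_{b\ne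 w(i)}c_i(b,\zeta)\Big).$$ Set $\lambda_i(-1)=\alpha_i(-1)/M_i$ and $\lambda_i(k)=(\alpha_i(k)-\alpha_i(k-1))/M_i$ for $k\ge0$ (under continuity $\alpha_i(k)\uparrow M_i$, so $(\lambda_i(k))_{k\ge-1}$ is a probability distribution on $\{-1,0,1,\dots\}$). The multicolor system has generator, on cylinder functions $f$, $Lf(\eta)=\sum_{i\in\mathbb{Z}^d}\sum_{a\ne\eta(i)}c_i(a,\eta)[f(\eta^{i,a})-f(\eta)]$. *)

theory Defs
  imports "HOL-Analysis.Analysis" "HOL-Probability.Probability_Mass_Function"
begin

definition norm1 :: "int ^ 'd \<Rightarrow> int" where
  "norm1 j = (\<Sum>u\<in>UNIV. \<bar>j $ u\<bar>)"

definition Vball :: "int ^ 'd \<Rightarrow> int \<Rightarrow> (int ^ 'd) set" where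
  "Vball i k = {j. norm1 (j - i) \<le> k}"   \<comment> \<open>for k = -1 this is the empty set\<close>

definition alpha_neg1 ::
  "(int ^ 'd \<Rightarrow> 'a::finite \<Rightarrow> (int ^ 'd \<Rightarrow> 'a) \<Rightarrow> real) \<Rightarrow> (int ^ 'd \<Rightarrow> real) \<Rightarrow> int ^ 'd \<Rightarrow> real" where
  "alpha_neg1 c M i =
     (\<Sum>a\<in>UNIV.
        (let R = M i - (SUP \<zeta>\<in>{\<zeta>. \<zeta> i = a}. (\<Sum>b\<in>UNIV - {a}. c i b \<zeta>))
         in if (\<exists>\<zeta>. \<zeta> i \<noteq> a) then min (INF \<zeta>\<in>{\<zeta>. \<zeta> i \<noteq> a}. c i a \<zeta>) R else R))"
  \<comment> \<open>convention: the infimum over the empty set is +\<infinity>, so the min is then R\<close>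

definition alpha_pos ::
  "(int ^ 'd \<Rightarrow> 'a::finite \<Rightarrow> (int ^ 'd \<Rightarrow> 'a) \<Rightarrow> real) \<Rightarrow> (int ^ 'd \<Rightarrow> real) \<Rightarrow> int ^ 'd \<Rightarrow> int \<Rightarrow> real" where
  "alpha_pos c M i k =
     Min ((\<lambda>w. (\<Sum>a\<in>UNIV - {w i}. (INF \<zeta>\<in>{\<zeta>. \<forall>j\<in>Vball i k. \<zeta> j = w j}. c i a \<zeta>))
               + M i - (SUP \<zeta>\<in>{\<zeta>. \<forall>j\<in>Vball i k. \<zeta> j = w j}. (\<Sum>b\<in>UNIV - {w i}. c i b \<zeta>)))
          ` (PiE (Vball i k) (\<lambda>_. UNIV)))"

definition alpha ::
  "(int ^ 'd \<Rightarrow> 'a::finite \<Rightarrow> (int ^ 'd \<Rightarrow> 'a) \<Rightarrow> real) \<Rightarrow> (int ^ 'd \<Rightarrow> real) \<Rightarrow> int ^ 'd \<Rightarrow> int \<Rightarrow> real" where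
  "alpha c M i k = (if k = -1 then alpha_neg1 c M i else alpha_pos c M i k)"

definition lam ::
  "(int ^ 'd \<Rightarrow> 'a::finite \<Rightarrow> (int ^ 'd \<Rightarrow> 'a) \<Rightarrow> real) \<Rightarrow> (int ^ 'd \<Rightarrow> real) \<Rightarrow> int ^ 'd \<Rightarrow> int \<Rightarrow> real" where
  "lam c M i k = (if k = -1 then alpha c M i (-1) / M i
                  else (alpha c M i k - alpha c M i (k - 1)) / M i)"

definition cylinder :: "((int ^ 'd \<Rightarrow> 'a) \<Rightarrow> real) \<Rightarrow> bool" where
  "cylinder f \<longleftrightarrow> (\<exists>S. finite S \<and> (\<forall>\<eta> \<zeta>. (\<forall>j\<in>S. \<eta> j = \<zeta> j) \<longrightarrow> f \<eta> = f \<zeta>))"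

definition generator ::
  "(int ^ 'd \<Rightarrow> 'a::finite \<Rightarrow> (int ^ 'd \<Rightarrow> 'a) \<Rightarrow> real) \<Rightarrow> ((int ^ 'd \<Rightarrow> 'a) \<Rightarrow> real) \<Rightarrow> (int ^ 'd \<Rightarrow> 'a) \<Rightarrow> real" where
  "generator c f \<eta> = (\<Sum>\<^sub>\<infinity>i. \<Sum>a\<in>UNIV - {\<eta> i}. c i a \<eta> * (f (\<eta>(i := a)) - f \<eta>))"

end

theory Submission
  imports Defs
begin

definition VV :: "int ^ 'd \<Rightarrow> nat \<Rightarrow> (int ^ 'd) set" where
  "VV i n = Vball i (int n - 1)"

definition agr :: "(int ^ 'd \<Rightarrow> 'a) \<Rightarrow> (int ^ 'd) set \<Rightarrow> (int ^ 'd \<Rightarrow> 'a) set" where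
  "agr \<eta> V = {\<zeta>. \<forall>j\<in>V. \<zeta> j = \<eta> j}"

definition mu ::
  "(int ^ 'd \<Rightarrow> 'a::finite \<Rightarrow> (int ^ 'd \<Rightarrow> 'a) \<Rightarrow> real) \<Rightarrow> (int ^ 'd \<Rightarrow> real) \<Rightarrow> int ^ 'd \<Rightarrow> nat
    \<Rightarrow> (int ^ 'd \<Rightarrow> 'a) \<Rightarrow> 'a \<Rightarrow> real" where
  "mu c M i n \<eta> a = (if n = 0 then
      (let R = M i - (SUP \<zeta>\<in>{\<zeta>. \<zeta> i = a}. (\<Sum>b\<in>UNIV - {a}. c i b \<zeta>))
         in if (\<exists>\<zeta>. \<zeta> i \<noteq> a) then min (INF \<zeta>\<in>{\<zeta>. \<zeta> i \<noteq> a}. c i a \<zeta>) R else R)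
    else (if a = \<eta> i then M i - (SUP \<zeta>\<in>agr \<eta> (VV i n). (\<Sum>b\<in>UNIV - {\<eta> i}. c i b \<zeta>))
          else (INF \<zeta>\<in>agr \<eta> (VV i n). c i a \<zeta>)))"

definition al where "al c M i n = alpha c M i (int n - 1)"
definition alp where "alp c M i n = (if n = 0 then 0 else al c M i (n - 1))"

definition qf ::
  "(int ^ 'd \<Rightarrow> 'a::finite \<Rightarrow> (int ^ 'd \<Rightarrow> 'a) \<Rightarrow> real) \<Rightarrow> (int ^ 'd \<Rightarrow> real) \<Rightarrow> int ^ 'd \<Rightarrow> nat
    \<Rightarrow> ((int ^ 'd \<Rightarrow> 'a) \<Rightarrow> 'a \<Rightarrow> real) \<Rightarrow> (int ^ 'd \<Rightarrow> 'a) \<Rightarrow> 'a \<Rightarrow> real" where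
  "qf c M i n r \<eta> a = (let m = (\<Sum>b\<in>UNIV. mu c M i n \<eta> b); ap = alp c M i n in
     if m - ap > 0 then (mu c M i n \<eta> a - r \<eta> a) / (m - ap) else 1 / real CARD('a))"

primrec rho where
  "rho c M i 0 = (\<lambda>\<eta> a. 0)"
| "rho c M i (Suc n) = (\<lambda>\<eta> a. rho c M i n \<eta> a + (al c M i n - alp c M i n) * qf c M i n (rho c M i n) \<eta> a)"

lemma finite_Vball: "finite (Vball (i :: int ^ 'd) k)"
proof -
  have "Vball i k \<subseteq> (\<lambda>f. \<chi> u. f u) ` (PiE UNIV (\<lambda>u. {i$u - k .. i$u + k}))"
  proof
    fix j assume j: "j \<in> Vball i k"
    have "\<bar>j$u - i$u\<bar> \<le> k" for u
    proof -
      have "\<bar>(j - i)$u\<bar> \<le> (\<Sum>v\<in>UNIV. \<bar>(j - i)$v\<bar>)"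
        by (rule member_le_sum) auto
      then show ?thesis using j by (simp add: Vball_def norm1_def)
    qed
    then have "\<And>u. i$u - k \<le> j$u \<and> j$u \<le> i$u + k" by (simp add: abs_le_iff) (smt (verit))
    then have "(\<lambda>u. j$u) \<in> PiE UNIV (\<lambda>u. {i$u - k .. i$u + k})" by auto
    moreover have "j = (\<chi> u. j$u)" by simp
    ultimately show "j \<in> (\<lambda>f. \<chi> u. f u) ` (PiE UNIV (\<lambda>u. {i$u - k .. i$u + k}))" by blast
  qed
  moreover have "finite (PiE (UNIV::'d set) (\<lambda>u. {i$u - k .. i$u + k}))"
    by (rule finite_PiE) auto
  ultimately show ?thesis by (meson finite_imageI finite_subset)
qed

lemma i_in_Vball: "0 \<le> k \<Longrightarrow> i \<in> Vball i k"
  by (simp add: Vball_def norm1_def)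

lemma i_in_VV: "n > 0 \<Longrightarrow> i \<in> VV i n"
  by (simp add: VV_def i_in_Vball)

lemma Vball_mono: "k \<le> k' \<Longrightarrow> Vball i k \<subseteq> Vball i k'"
  by (auto simp: Vball_def)

lemma VV_mono: "n \<le> n' \<Longrightarrow> VV i n \<subseteq> VV i n'"
  by (simp add: VV_def Vball_mono)

lemma mu_dep:
  assumes "\<forall>j\<in>VV i n. \<eta> j = \<eta>' j"
  shows "mu c M i n \<eta> = mu c M i n \<eta>'"
proof (cases "n = 0")
  case True then show ?thesis by (simp add: mu_def fun_eq_iff)
next
  case False
  then have "\<eta> i = \<eta>' i" using assms i_in_VV by blast
  moreover have "agr \<eta> (VV i n) = agr \<eta>' (VV i n)" using assms by (auto simp: agr_def)
  ultimately show ?thesis by (simp add: mu_def fun_eq_iff)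
qed

lemma sum_mu_pos:
  assumes "n > 0"
  shows "(\<Sum>a\<in>UNIV. mu c M i n \<eta> a) = (\<Sum>a\<in>UNIV - {\<eta> i}. (INF \<zeta>\<in>agr \<eta> (VV i n). c i a \<zeta>))
     + M i - (SUP \<zeta>\<in>agr \<eta> (VV i n). (\<Sum>b\<in>UNIV - {\<eta> i}. c i b \<zeta>))"
proof -
  have "(\<Sum>a\<in>UNIV. mu c M i n \<eta> a) = mu c M i n \<eta> (\<eta> i) + (\<Sum>a\<in>UNIV - {\<eta> i}. mu c M i n \<eta> a)"
    by (simp add: sum.remove)
  also have "(\<Sum>a\<in>UNIV - {\<eta> i}. mu c M i n \<eta> a) = (\<Sum>a\<in>UNIV - {\<eta> i}. (INF \<zeta>\<in>agr \<eta> (VV i n). c i a \<zeta>))"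
    by (rule sum.cong) (use assms in \<open>auto simp: mu_def\<close>)
  finally show ?thesis using assms by (simp add: mu_def)
qed

lemma al0: "al c M i 0 = (\<Sum>a\<in>UNIV. mu c M i 0 \<eta> a)"
  by (simp add: al_def alpha_def alpha_neg1_def mu_def)

lemma al_pos: "n > 0 \<Longrightarrow> al c M i n = Min ((\<lambda>w. \<Sum>a\<in>UNIV. mu c M i n w a) ` PiE (VV i n) (\<lambda>_. UNIV))"
proof -
  assume n: "n > 0"
  have "al c M i n = alpha_pos c M i (int n - 1)" using n by (simp add: al_def alpha_def)
  also have "\<dots> = Min ((\<lambda>w. \<Sum>a\<in>UNIV. mu c M i n w a) ` PiE (VV i n) (\<lambda>_. UNIV))"
    unfolding alpha_pos_def
    by (intro arg_cong[where f=Min] image_cong) (use n in \<open>simp_all add: sum_mu_pos VV_def agr_def\<close>)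
  finally show ?thesis .
qed

lemma al_le_mu:
  fixes c :: "int ^ 'd \<Rightarrow> 'a::finite \<Rightarrow> (int ^ 'd \<Rightarrow> 'a) \<Rightarrow> real"
  shows "al c M i n \<le> (\<Sum>a\<in>UNIV. mu c M i n \<eta> a)"
proof (cases "n = 0")
  case True then show ?thesis using al0 by (metis order_refl)
next
  case False
  have fin: "finite (PiE (VV i n) (\<lambda>_. UNIV::'a set))"
    by (rule finite_PiE) (auto simp: VV_def finite_Vball)
  have "(\<Sum>a\<in>UNIV. mu c M i n \<eta> a) = (\<Sum>a\<in>UNIV. mu c M i n (restrict \<eta> (VV i n)) a)"
    by (simp add: mu_dep[of i n \<eta> "restrict \<eta> (VV i n)"])
  moreover have "restrict \<eta> (VV i n) \<in> PiE (VV i n) (\<lambda>_. UNIV)" by auto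
  ultimately show ?thesis using False fin by (auto simp: al_pos intro!: Min_le finite_imageI)
qed

lemma al_ge:
  fixes c :: "int ^ 'd \<Rightarrow> 'a::finite \<Rightarrow> (int ^ 'd \<Rightarrow> 'a) \<Rightarrow> real"
  shows "(\<And>\<eta>. x \<le> (\<Sum>a\<in>UNIV. mu c M i n \<eta> a)) \<Longrightarrow> x \<le> al c M i n"
proof (cases "n = 0")
  case True then show "(\<And>\<eta>. x \<le> (\<Sum>a\<in>UNIV. mu c M i n \<eta> a)) \<Longrightarrow> x \<le> al c M i n" using al0 by metis
next
  case False
  assume h: "\<And>\<eta>. x \<le> (\<Sum>a\<in>UNIV. mu c M i n \<eta> a)"
  have fin: "finite (PiE (VV i n) (\<lambda>_. UNIV::'a set))"
    by (rule finite_PiE) (auto simp: VV_def finite_Vball)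
  have ne: "PiE (VV i n) (\<lambda>_. UNIV::'a set) \<noteq> {}" by (simp add: PiE_eq_empty_iff)
  show ?thesis using False fin ne h by (simp add: al_pos Min_ge_iff finite_imageI)
qed

lemma if_min_le: "(if P then min (X::real) R else R) \<le> R" by (simp add: min_def)

lemma if_min_le2: "P \<Longrightarrow> (if P then min (X::real) R else R) \<le> X" by (simp add: min_def)

lemma agr_self[simp]: "\<eta> \<in> agr \<eta> V" by (simp add: agr_def)
lemma agr_ne[simp]: "agr \<eta> V \<noteq> {}" using agr_self by blast
lemma agr_i: "n > 0 \<Longrightarrow> \<zeta> \<in> agr \<eta> (VV i n) \<Longrightarrow> \<zeta> i = \<eta> i"
  using i_in_VV by (auto simp: agr_def)
lemma agr_mono: "n \<le> n' \<Longrightarrow> agr \<eta> (VV i n') \<subseteq> agr \<eta> (VV i n)"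
  using VV_mono[of n n' i] by (auto simp: agr_def)

locale sys =
  fixes c :: "int ^ 'd \<Rightarrow> 'a::finite \<Rightarrow> (int ^ 'd \<Rightarrow> 'a) \<Rightarrow> real"
    and M :: "int ^ 'd \<Rightarrow> real"
  assumes pos: "\<And>i a \<eta>. a \<noteq> \<eta> i \<Longrightarrow> 0 < c i a \<eta>"
    and Mpos: "\<And>i. 0 < M i"
    and Mbound: "\<And>i \<eta>. (\<Sum>a\<in>UNIV - {\<eta> i}. c i a \<eta>) \<le> M i"
    and cdiag: "\<And>i \<eta>. c i (\<eta> i) \<eta> = M i - (\<Sum>a\<in>UNIV - {\<eta> i}. c i a \<eta>)"
    and cont: "\<And>a \<epsilon>. \<epsilon> > 0 \<Longrightarrow> \<exists>K::nat. \<forall>k\<ge>K. \<forall>i \<eta> \<zeta>.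
                  (\<forall>j\<in>Vball i (int k). \<eta> j = \<zeta> j) \<longrightarrow> \<bar>c i a \<eta> - c i a \<zeta>\<bar> \<le> \<epsilon>"
begin

lemma sum_c: "(\<Sum>a\<in>UNIV. c i a \<eta>) = M i"
  by (simp add: sum.remove[of UNIV "\<eta> i"] cdiag)

lemma bddS: "\<forall>\<zeta>\<in>S. \<zeta> i = a \<Longrightarrow> bdd_above ((\<lambda>\<zeta>. \<Sum>b\<in>UNIV-{a}. c i b \<zeta>) ` S)"
  by (rule bdd_aboveI2[where M="M i"]) (metis Mbound)

lemma SUPle: "S \<noteq> {} \<Longrightarrow> \<forall>\<zeta>\<in>S. \<zeta> i = a \<Longrightarrow> (SUP \<zeta>\<in>S. \<Sum>b\<in>UNIV-{a}. c i b \<zeta>) \<le> M i"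
  by (rule cSUP_least) (auto, metis Mbound)

lemma bddI: "\<forall>\<zeta>\<in>S. \<zeta> i \<noteq> a \<Longrightarrow> bdd_below ((\<lambda>\<zeta>. c i a \<zeta>) ` S)"
  by (rule bdd_belowI2[where m=0]) (metis pos less_imp_le)

lemma INFge: "S \<noteq> {} \<Longrightarrow> \<forall>\<zeta>\<in>S. \<zeta> i \<noteq> a \<Longrightarrow> 0 \<le> (INF \<zeta>\<in>S. c i a \<zeta>)"
  by (rule cINF_greatest) (auto intro: less_imp_le pos)

lemma mu_nonneg: "0 \<le> mu c M i n \<eta> a"
proof (cases "n = 0")
  case True
  have R: "0 \<le> M i - (SUP \<zeta>\<in>{\<zeta>. \<zeta> i = a}. \<Sum>b\<in>UNIV-{a}. c i b \<zeta>)"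
  proof -
    have "(\<lambda>_. a) \<in> {\<zeta>. \<zeta> i = a}" by simp
    then have ne: "{\<zeta>. \<zeta> i = a} \<noteq> {}" by (metis equals0D)
    have "(SUP \<zeta>\<in>{\<zeta>. \<zeta> i = a}. \<Sum>b\<in>UNIV-{a}. c i b \<zeta>) \<le> M i" by (rule SUPle[OF ne]) blast
    then show ?thesis by linarith
  qed
  show ?thesis
  proof (cases "\<exists>\<zeta>. \<zeta> i \<noteq> a")
    case ex: True
    have "0 \<le> (INF \<zeta>\<in>{\<zeta>. \<zeta> i \<noteq> a}. c i a \<zeta>)"
      by (rule INFge) (use ex in auto)
    then show ?thesis unfolding mu_def Let_def if_P[OF True] if_P[OF ex] using R by linarith
  next
    case ex: False
    show ?thesis unfolding mu_def Let_def if_P[OF True] if_not_P[OF ex] using R by linarith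
  qed
next
  case False
  have "(SUP \<zeta>\<in>agr \<eta> (VV i n). \<Sum>b\<in>UNIV-{\<eta> i}. c i b \<zeta>) \<le> M i"
    by (rule SUPle) (use False agr_i in auto)
  moreover have "a \<noteq> \<eta> i \<Longrightarrow> 0 \<le> (INF \<zeta>\<in>agr \<eta> (VV i n). c i a \<zeta>)"
    by (rule INFge) (use False agr_i in auto)
  ultimately show ?thesis using False by (simp add: mu_def)
qed

lemma mu_le_c: "mu c M i n \<eta> a \<le> c i a \<eta>"
proof (cases "a = \<eta> i")
  case True
  have 1: "(\<Sum>b\<in>UNIV-{\<eta> i}. c i b \<eta>) \<le> (SUP \<zeta>\<in>{\<zeta>. \<zeta> i = \<eta> i}. \<Sum>b\<in>UNIV-{\<eta> i}. c i b \<zeta>)"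
    by (rule cSUP_upper) (auto intro: bddS)
  have 2: "n \<noteq> 0 \<Longrightarrow> (\<Sum>b\<in>UNIV-{\<eta> i}. c i b \<eta>) \<le> (SUP \<zeta>\<in>agr \<eta> (VV i n). \<Sum>b\<in>UNIV-{\<eta> i}. c i b \<zeta>)"
    by (rule cSUP_upper) (auto intro!: bddS dest: agr_i)
  show ?thesis
  proof (cases "n = 0")
    case n: True
    have "mu c M i n \<eta> a \<le> M i - (SUP \<zeta>\<in>{\<zeta>. \<zeta> i = \<eta> i}. \<Sum>b\<in>UNIV-{\<eta> i}. c i b \<zeta>)"
      using n True by (simp add: mu_def Let_def)
    moreover have "c i a \<eta> = c i (\<eta> i) \<eta>" using True by simp
    ultimately show ?thesis using 1 cdiag[of i \<eta>] by linarith
  next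
    case n: False
    then show ?thesis using 2 True cdiag[of i \<eta>] by (simp add: mu_def)
  qed
next
  case False
  show ?thesis
  proof (cases "n = 0")
    case n: True
    have "(INF \<zeta>\<in>{\<zeta>. \<zeta> i \<noteq> a}. c i a \<zeta>) \<le> c i a \<eta>"
      by (rule cINF_lower) (use False in \<open>auto intro: bddI\<close>)
    moreover have "\<exists>\<zeta>. \<zeta> i \<noteq> a" using False by (metis)
    ultimately show ?thesis using n False by (simp add: mu_def Let_def)
  next
    case n: False
    have "(INF \<zeta>\<in>agr \<eta> (VV i n). c i a \<zeta>) \<le> c i a \<eta>"
      by (rule cINF_lower) (use False n agr_i in \<open>auto intro!: bddI\<close>)
    then show ?thesis using n False by (simp add: mu_def)
  qed
qed

lemma mu_mono: "mu c M i n \<eta> a \<le> mu c M i (Suc n) \<eta> a"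
proof (cases "n = 0")
  case n: True
  have ai: "\<zeta> \<in> agr \<eta> (VV i (Suc n)) \<Longrightarrow> \<zeta> i = \<eta> i" for \<zeta> using agr_i[of "Suc n" \<zeta> \<eta> i] by simp
  show ?thesis
  proof (cases "a = \<eta> i")
    case True
    have le: "(SUP \<zeta>\<in>agr \<eta> (VV i (Suc n)). \<Sum>b\<in>UNIV-{\<eta> i}. c i b \<zeta>)
      \<le> (SUP \<zeta>\<in>{\<zeta>. \<zeta> i = \<eta> i}. \<Sum>b\<in>UNIV-{\<eta> i}. c i b \<zeta>)"
    proof -
      have bdd: "bdd_above ((\<lambda>\<zeta>. \<Sum>b\<in>UNIV-{\<eta> i}. c i b \<zeta>) ` {\<zeta>. \<zeta> i = \<eta> i})"
        by (rule bddS) blast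
      have sub: "agr \<eta> (VV i (Suc n)) \<subseteq> {\<zeta>. \<zeta> i = \<eta> i}" using ai by blast
      show ?thesis by (rule cSUP_subset_mono[OF agr_ne bdd sub]) simp
    qed
    have h: "mu c M i n \<eta> (\<eta> i) \<le> M i - (SUP \<zeta>\<in>{\<zeta>. \<zeta> i = \<eta> i}. \<Sum>b\<in>UNIV-{\<eta> i}. c i b \<zeta>)"
      unfolding mu_def Let_def if_P[OF n] by (rule if_min_le)
    have eq: "mu c M i (Suc n) \<eta> (\<eta> i) = M i - (SUP \<zeta>\<in>agr \<eta> (VV i (Suc n)). \<Sum>b\<in>UNIV-{\<eta> i}. c i b \<zeta>)"
      by (simp add: mu_def)
    have "mu c M i n \<eta> (\<eta> i) \<le> mu c M i (Suc n) \<eta> (\<eta> i)"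
      using le h eq by linarith
    then show ?thesis using True by simp
  next
    case False
    have le: "(INF \<zeta>\<in>{\<zeta>. \<zeta> i \<noteq> a}. c i a \<zeta>) \<le> (INF \<zeta>\<in>agr \<eta> (VV i (Suc n)). c i a \<zeta>)"
    proof -
      have bdd: "bdd_below ((\<lambda>\<zeta>. c i a \<zeta>) ` {\<zeta>. \<zeta> i \<noteq> a})"
        by (rule bddI) blast
      have sub: "agr \<eta> (VV i (Suc n)) \<subseteq> {\<zeta>. \<zeta> i \<noteq> a}" using ai False by auto
      show ?thesis by (rule cINF_superset_mono[OF agr_ne bdd sub]) simp
    qed
    have ex: "\<exists>\<zeta>. \<zeta> i \<noteq> a" using False by (metis)
    have "mu c M i n \<eta> a \<le> (INF \<zeta>\<in>{\<zeta>. \<zeta> i \<noteq> a}. c i a \<zeta>)"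
      unfolding mu_def Let_def if_P[OF n] using ex by (rule if_min_le2)
    moreover have "mu c M i (Suc n) \<eta> a = (INF \<zeta>\<in>agr \<eta> (VV i (Suc n)). c i a \<zeta>)"
      using False by (simp add: mu_def)
    ultimately show ?thesis using le by linarith
  qed
next
  case n: False
  have ai: "\<zeta> \<in> agr \<eta> (VV i n) \<Longrightarrow> \<zeta> i = \<eta> i" for \<zeta> using agr_i[of n \<zeta> \<eta> i] n by simp
  have sub: "agr \<eta> (VV i (Suc n)) \<subseteq> agr \<eta> (VV i n)" by (rule agr_mono) simp
  show ?thesis
  proof (cases "a = \<eta> i")
    case True
    have le: "(SUP \<zeta>\<in>agr \<eta> (VV i (Suc n)). \<Sum>b\<in>UNIV-{\<eta> i}. c i b \<zeta>)
      \<le> (SUP \<zeta>\<in>agr \<eta> (VV i n). \<Sum>b\<in>UNIV-{\<eta> i}. c i b \<zeta>)"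
    proof -
      have bdd: "bdd_above ((\<lambda>\<zeta>. \<Sum>b\<in>UNIV-{\<eta> i}. c i b \<zeta>) ` agr \<eta> (VV i n))"
        by (rule bddS) (use ai in blast)
      show ?thesis by (rule cSUP_subset_mono[OF agr_ne bdd sub]) simp
    qed
    then show ?thesis using n True by (simp add: mu_def)
  next
    case False
    have le: "(INF \<zeta>\<in>agr \<eta> (VV i n). c i a \<zeta>) \<le> (INF \<zeta>\<in>agr \<eta> (VV i (Suc n)). c i a \<zeta>)"
    proof -
      have bdd: "bdd_below ((\<lambda>\<zeta>. c i a \<zeta>) ` agr \<eta> (VV i n))"
        by (rule bddI) (use ai False in auto)
      show ?thesis by (rule cINF_superset_mono[OF agr_ne bdd sub]) simp
    qed
    then show ?thesis using n False by (simp add: mu_def)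
  qed
qed

lemma sum_mu_le_M: "(\<Sum>a\<in>UNIV. mu c M i n \<eta> a) \<le> M i"
proof -
  have "(\<Sum>a\<in>UNIV. mu c M i n \<eta> a) \<le> (\<Sum>a\<in>UNIV. c i a \<eta>)"
    by (rule sum_mono) (rule mu_le_c)
  then show ?thesis by (simp add: sum_c)
qed

lemma al_le_M: "al c M i n \<le> M i"
  using al_le_mu[of c M i n undefined] sum_mu_le_M[of i n undefined] by linarith

lemma al_mono: "al c M i n \<le> al c M i (Suc n)"
proof (rule al_ge)
  fix \<eta>
  have "(\<Sum>a\<in>UNIV. mu c M i n \<eta> a) \<le> (\<Sum>a\<in>UNIV. mu c M i (Suc n) \<eta> a)"
    by (rule sum_mono) (rule mu_mono)
  then show "al c M i n \<le> (\<Sum>a\<in>UNIV. mu c M i (Suc n) \<eta> a)"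
    using al_le_mu[of c M i n \<eta>] by linarith
qed

lemma al_nonneg: "0 \<le> al c M i n"
proof (rule al_ge)
  fix \<eta> show "0 \<le> (\<Sum>a\<in>UNIV. mu c M i n \<eta> a)" by (rule sum_nonneg) (rule mu_nonneg)
qed

lemma alp_le_al: "alp c M i n \<le> al c M i n"
proof (cases n)
  case 0 then show ?thesis by (simp add: alp_def al_nonneg)
next
  case (Suc m) then show ?thesis using al_mono[of i m] by (simp add: alp_def)
qed

lemma al_lim:
  assumes e: "\<epsilon> > 0"
  shows "\<exists>N. \<forall>n\<ge>N. M i - \<epsilon> \<le> al c M i n"
proof -
  define C where "C = real CARD('a)"
  have C: "C > 0" by (simp add: C_def)
  define e' where "e' = \<epsilon> / (2 * C)"
  have e': "e' > 0" using e C by (simp add: e'_def)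
  have "\<forall>a. \<exists>K::nat. \<forall>k\<ge>K. \<forall>i \<eta> \<zeta>.
                  (\<forall>j\<in>Vball i (int k). \<eta> j = \<zeta> j) \<longrightarrow> \<bar>c i a \<eta> - c i a \<zeta>\<bar> \<le> e'"
    using cont[OF e'] by blast
  then obtain Kf where Kf: "\<And>a k i \<eta> \<zeta>. k \<ge> Kf a \<Longrightarrow> (\<forall>j\<in>Vball i (int k). \<eta> j = \<zeta> j)
      \<Longrightarrow> \<bar>c i a \<eta> - c i a \<zeta>\<bar> \<le> e'"
    by metis
  define K where "K = Max (range Kf)"
  have KK: "Kf a \<le> K" for a unfolding K_def by (rule Max_ge) auto
  show ?thesis
  proof (intro exI allI impI)
    fix n assume n: "Suc K \<le> n"
    then have n0: "n > 0" by simp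
    show "M i - \<epsilon> \<le> al c M i n"
    proof (rule al_ge)
      fix \<eta> :: "int ^ 'd \<Rightarrow> 'a"
      let ?S = "agr \<eta> (VV i n)"
      let ?U = "UNIV - {\<eta> i}"
      have close: "\<bar>c i a \<eta> - c i a \<zeta>\<bar> \<le> e'" if "\<zeta> \<in> ?S" for a \<zeta>
      proof (rule Kf)
        show "Kf a \<le> n - 1" using KK[of a] n by simp
        show "\<forall>j\<in>Vball i (int (n - 1)). \<eta> j = \<zeta> j"
          using that n0 by (auto simp: agr_def VV_def of_nat_diff)
      qed
      have inf: "c i a \<eta> - e' \<le> (INF \<zeta>\<in>?S. c i a \<zeta>)" for a
      proof (rule cINF_greatest)
        show "?S \<noteq> {}" by simp
        fix \<zeta> assume "\<zeta> \<in> ?S"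
        then have "\<bar>c i a \<eta> - c i a \<zeta>\<bar> \<le> e'" by (rule close)
        then show "c i a \<eta> - e' \<le> c i a \<zeta>" by linarith
      qed
      have sup: "(SUP \<zeta>\<in>?S. \<Sum>b\<in>?U. c i b \<zeta>) \<le> (\<Sum>b\<in>?U. c i b \<eta> + e')"
      proof (rule cSUP_least)
        show "?S \<noteq> {}" by simp
        fix \<zeta> assume z: "\<zeta> \<in> ?S"
        show "(\<Sum>b\<in>?U. c i b \<zeta>) \<le> (\<Sum>b\<in>?U. c i b \<eta> + e')"
        proof (rule sum_mono)
          fix b have "\<bar>c i b \<eta> - c i b \<zeta>\<bar> \<le> e'" by (rule close[OF z])
          then show "c i b \<zeta> \<le> c i b \<eta> + e'" by linarith
        qed
      qed
      have s1: "(\<Sum>a\<in>?U. c i a \<eta> - e') \<le> (\<Sum>a\<in>?U. (INF \<zeta>\<in>?S. c i a \<zeta>))"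
        by (rule sum_mono) (rule inf)
      have cardU: "real (card ?U) \<le> C" unfolding C_def by (simp add: card_mono)
      have "(\<Sum>a\<in>?U. c i a \<eta> - e') = (\<Sum>a\<in>?U. c i a \<eta>) - real (card ?U) * e'"
        by (simp add: sum_subtractf)
      moreover have "(\<Sum>b\<in>?U. c i b \<eta> + e') = (\<Sum>b\<in>?U. c i b \<eta>) + real (card ?U) * e'"
        by (simp add: sum.distrib)
      moreover have "real (card ?U) * e' \<le> C * e'" using cardU e' by (simp add: mult_right_mono)
      moreover have "2 * (C * e') = \<epsilon>" using C by (simp add: e'_def)
      ultimately show "M i - \<epsilon> \<le> (\<Sum>a\<in>UNIV. mu c M i n \<eta> a)"
        using sum_mu_pos[OF n0, of c M i \<eta>] s1 sup by linarith
    qed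
  qed
qed

lemma al_bound_lim:
  assumes e: "r > 0"
  shows "\<exists>N. \<forall>n\<ge>N. M i - al c M i n < r"
proof -
  have "r/2 > 0" using e by simp
  then obtain N where N: "\<forall>n\<ge>N. M i - r/2 \<le> al c M i n" using al_lim[of "r/2" i] by blast
  show ?thesis
  proof (intro exI allI impI)
    fix n assume "N \<le> n"
    then have "M i - r/2 \<le> al c M i n" using N by blast
    then show "M i - al c M i n < r" using e by linarith
  qed
qed

lemma qf_dep:
  assumes "mu c M i n \<eta> = mu c M i n \<eta>'" "r \<eta> = r \<eta>'"
  shows "qf c M i n r \<eta> = qf c M i n r \<eta>'"
  by (rule ext) (simp only: qf_def assms)

lemma qf_props:
  assumes r: "\<And>a. 0 \<le> r \<eta> a \<and> r \<eta> a \<le> mu c M i n \<eta> a"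
    and rs: "(\<Sum>a\<in>UNIV. r \<eta> a) = alp c M i n"
  shows "0 \<le> qf c M i n r \<eta> a"
    and "(\<Sum>a\<in>UNIV. qf c M i n r \<eta> a) = 1"
    and "(al c M i n - alp c M i n) * qf c M i n r \<eta> a \<le> mu c M i n \<eta> a - r \<eta> a"
proof -
  define m where "m = (\<Sum>b\<in>UNIV. mu c M i n \<eta> b)"
  define ap where "ap = alp c M i n"
  have m1: "al c M i n \<le> m" unfolding m_def by (rule al_le_mu)
  have m2: "ap \<le> al c M i n" unfolding ap_def by (rule alp_le_al)
  have q: "qf c M i n r \<eta> = (\<lambda>a. if m - ap > 0 then (mu c M i n \<eta> a - r \<eta> a) / (m - ap) else 1 / real CARD('a))"
    by (simp add: qf_def m_def ap_def fun_eq_iff Let_def)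
  have d: "0 \<le> mu c M i n \<eta> a - r \<eta> a" for a using r[of a] by simp
  show "0 \<le> qf c M i n r \<eta> a" unfolding q using d[of a] by simp
  show "(\<Sum>a\<in>UNIV. qf c M i n r \<eta> a) = 1"
  proof (cases "m - ap > 0")
    case True
    have "(\<Sum>a\<in>UNIV. (mu c M i n \<eta> a - r \<eta> a) / (m - ap)) = (\<Sum>a\<in>UNIV. mu c M i n \<eta> a - r \<eta> a) / (m - ap)"
      by (simp add: sum_divide_distrib)
    also have "(\<Sum>a\<in>UNIV. mu c M i n \<eta> a - r \<eta> a) = m - ap"
      by (simp add: sum_subtractf m_def ap_def rs)
    finally show ?thesis unfolding q using True by simp
  next
    case False then show ?thesis unfolding q by simp
  qed
  show "(al c M i n - alp c M i n) * qf c M i n r \<eta> a \<le> mu c M i n \<eta> a - r \<eta> a"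
  proof (cases "m - ap > 0")
    case True
    have le1: "(al c M i n - ap) / (m - ap) \<le> 1" using True m1 by simp
    have ge0: "0 \<le> (al c M i n - ap) / (m - ap)" using True m2 by simp
    have "(al c M i n - ap) * ((mu c M i n \<eta> a - r \<eta> a) / (m - ap))
        = (mu c M i n \<eta> a - r \<eta> a) * ((al c M i n - ap) / (m - ap))" by simp
    also have "\<dots> \<le> (mu c M i n \<eta> a - r \<eta> a) * 1"
      by (rule mult_left_mono[OF le1 d])
    finally show ?thesis unfolding q using True by (simp add: ap_def)
  next
    case False
    then have "al c M i n - ap = 0" using m1 m2 by linarith
    then show ?thesis using d[of a] by (simp add: ap_def)
  qed
qed

lemma rho_inv:
  "(\<forall>\<eta> a. 0 \<le> rho c M i n \<eta> a \<and> rho c M i n \<eta> a \<le> mu c M i n \<eta> a)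
   \<and> (\<forall>\<eta>. (\<Sum>a\<in>UNIV. rho c M i n \<eta> a) = alp c M i n)
   \<and> (\<forall>\<eta> \<eta>'. (\<forall>j\<in>VV i n. \<eta> j = \<eta>' j) \<longrightarrow> rho c M i n \<eta> = rho c M i n \<eta>')"
proof (induction n)
  case 0
  then show ?case by (simp add: mu_nonneg alp_def)
next
  case (Suc n)
  have r: "\<And>\<eta> a. 0 \<le> rho c M i n \<eta> a \<and> rho c M i n \<eta> a \<le> mu c M i n \<eta> a"
    and rs: "\<And>\<eta>. (\<Sum>a\<in>UNIV. rho c M i n \<eta> a) = alp c M i n"
    and rd: "\<And>\<eta> \<eta>'. (\<forall>j\<in>VV i n. \<eta> j = \<eta>' j) \<Longrightarrow> rho c M i n \<eta> = rho c M i n \<eta>'"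
    using Suc.IH by blast+
  note qp = qf_props[of "rho c M i n", OF r rs]
  have ge: "0 \<le> al c M i n - alp c M i n" using alp_le_al[of i n] by simp
  have A: "0 \<le> rho c M i (Suc n) \<eta> a \<and> rho c M i (Suc n) \<eta> a \<le> mu c M i (Suc n) \<eta> a" for \<eta> a
  proof -
    have "0 \<le> (al c M i n - alp c M i n) * qf c M i n (rho c M i n) \<eta> a"
      using ge qp(1) by simp
    moreover have "mu c M i n \<eta> a \<le> mu c M i (Suc n) \<eta> a" by (rule mu_mono)
    ultimately show ?thesis using r[of \<eta> a] qp(3)[of \<eta> a] by simp
  qed
  have B: "(\<Sum>a\<in>UNIV. rho c M i (Suc n) \<eta> a) = alp c M i (Suc n)" for \<eta>
  proof -
    have "(\<Sum>a\<in>UNIV. rho c M i (Suc n) \<eta> a) = (\<Sum>a\<in>UNIV. rho c M i n \<eta> a)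
        + (al c M i n - alp c M i n) * (\<Sum>a\<in>UNIV. qf c M i n (rho c M i n) \<eta> a)"
      by (simp add: sum.distrib sum_distrib_left)
    then show ?thesis using rs[of \<eta>] qp(2)[of \<eta>] by (simp add: alp_def)
  qed
  have D: "rho c M i (Suc n) \<eta> = rho c M i (Suc n) \<eta>'" if h: "\<forall>j\<in>VV i (Suc n). \<eta> j = \<eta>' j" for \<eta> \<eta>'
  proof -
    have h': "\<forall>j\<in>VV i n. \<eta> j = \<eta>' j" using h VV_mono[of n "Suc n" i] by auto
    have e1: "rho c M i n \<eta> = rho c M i n \<eta>'" by (rule rd[OF h'])
    have e2: "mu c M i n \<eta> = mu c M i n \<eta>'" by (rule mu_dep[OF h'])
    have e3: "qf c M i n (rho c M i n) \<eta> = qf c M i n (rho c M i n) \<eta>'" by (rule qf_dep[OF e2 e1])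
    show ?thesis using e1 e3 by (simp add: fun_eq_iff)
  qed
  show ?case using A B D by blast
qed

lemma rho_lim: "(\<lambda>N. rho c M i N \<eta> a) \<longlonglongrightarrow> c i a \<eta>"
proof -
  have bnd: "0 \<le> c i a \<eta> - rho c M i (Suc n) \<eta> a \<and> c i a \<eta> - rho c M i (Suc n) \<eta> a \<le> M i - al c M i n" for n
  proof -
    have inv: "\<And>b. 0 \<le> rho c M i (Suc n) \<eta> b \<and> rho c M i (Suc n) \<eta> b \<le> mu c M i (Suc n) \<eta> b"
      and sm: "(\<Sum>b\<in>UNIV. rho c M i (Suc n) \<eta> b) = alp c M i (Suc n)"
      using rho_inv[of i "Suc n"] by blast+
    have le: "rho c M i (Suc n) \<eta> b \<le> c i b \<eta>" for b using inv[of b] mu_le_c[of i "Suc n" \<eta> b] by linarith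
    have "c i a \<eta> - rho c M i (Suc n) \<eta> a \<le> (\<Sum>b\<in>UNIV. c i b \<eta> - rho c M i (Suc n) \<eta> b)"
      by (rule member_le_sum) (use le in auto)
    also have "\<dots> = M i - alp c M i (Suc n)" by (simp only: sum_subtractf sum_c sm)
    also have "\<dots> = M i - al c M i n" by (simp add: alp_def)
    finally show ?thesis using le[of a] by simp
  qed
  show ?thesis
  proof (rule LIMSEQ_I)
    fix r :: real assume r: "0 < r"
    obtain N where N: "\<forall>n\<ge>N. M i - al c M i n < r" using al_bound_lim[OF r] by blast
    show "\<exists>no. \<forall>n\<ge>no. norm (rho c M i n \<eta> a - c i a \<eta>) < r"
    proof (intro exI allI impI)
      fix n assume n: "Suc N \<le> n"
      then obtain m where m: "n = Suc m" "N \<le> m" by (metis Suc_le_D Suc_le_mono)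
      have "M i - al c M i m < r" using N m(2) by blast
      then show "norm (rho c M i n \<eta> a - c i a \<eta>) < r" using bnd[of m] m(1) by simp
    qed
  qed
qed

lemma lam_eq: "lam c M i (int n - 1) = (al c M i n - alp c M i n) / M i"
proof (cases n)
  case 0 then show ?thesis by (simp add: lam_def al_def alp_def)
next
  case (Suc m)
  have "int n - 1 - 1 = int m - 1" using Suc by simp
  then show ?thesis using Suc by (simp add: lam_def al_def alp_def)
qed

lemma qf_ok:
  shows "0 \<le> qf c M i n (rho c M i n) w a" and "(\<Sum>a\<in>UNIV. qf c M i n (rho c M i n) w a) = 1"
proof -
  have r: "\<And>a. 0 \<le> rho c M i n w a \<and> rho c M i n w a \<le> mu c M i n w a"
    and rs: "(\<Sum>a\<in>UNIV. rho c M i n w a) = alp c M i n"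
    using rho_inv[of i n] by blast+
  show "0 \<le> qf c M i n (rho c M i n) w a" by (rule qf_props(1)[where r="rho c M i n" and \<eta>=w and i=i and n=n, OF r rs])
  show "(\<Sum>a\<in>UNIV. qf c M i n (rho c M i n) w a) = 1" by (rule qf_props(2)[where r="rho c M i n" and \<eta>=w and i=i and n=n, OF r rs])
qed

lemma pmf_Pm: "pmf (embed_pmf (qf c M i n (rho c M i n) w)) a = qf c M i n (rho c M i n) w a"
proof (rule pmf_embed_pmf)
  show "\<And>x. 0 \<le> qf c M i n (rho c M i n) w x" by (rule qf_ok(1))
  have "(\<integral>\<^sup>+ x. ennreal (qf c M i n (rho c M i n) w x) \<partial>count_space UNIV)
      = (\<Sum>x\<in>UNIV. ennreal (qf c M i n (rho c M i n) w x))"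
    by (rule nn_integral_count_space_finite) simp
  also have "\<dots> = ennreal (\<Sum>x\<in>UNIV. qf c M i n (rho c M i n) w x)"
    by (rule sum_ennreal) (rule qf_ok(1))
  also have "\<dots> = 1" by (simp add: qf_ok(2))
  finally show "(\<integral>\<^sup>+ x. ennreal (qf c M i n (rho c M i n) w x) \<partial>count_space UNIV) = 1" .
qed

lemma hs:
  "((\<lambda>k. lam c M i k * pmf (embed_pmf (qf c M i (nat (k+1)) (rho c M i (nat (k+1))) (restrict \<eta> (Vball i k)))) a)
      has_sum (c i a \<eta> / M i)) {-1..}"
proof -
  define t where "t n = (rho c M i (Suc n) \<eta> a - rho c M i n \<eta> a) / M i" for n
  have tm: "lam c M i (int n - 1) * pmf (embed_pmf (qf c M i (nat (int n - 1 + 1)) (rho c M i (nat (int n - 1 + 1)))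
       (restrict \<eta> (Vball i (int n - 1))))) a = t n" for n
  proof -
    have agr: "\<forall>j\<in>VV i n. restrict \<eta> (VV i n) j = \<eta> j" by simp
    have e1: "rho c M i n (restrict \<eta> (VV i n)) = rho c M i n \<eta>"
      using rho_inv[of i n] agr by blast
    have e2: "mu c M i n (restrict \<eta> (VV i n)) = mu c M i n \<eta>" by (rule mu_dep[OF agr])
    have e3: "qf c M i n (rho c M i n) (restrict \<eta> (VV i n)) = qf c M i n (rho c M i n) \<eta>"
      by (rule qf_dep[OF e2 e1])
    have "pmf (embed_pmf (qf c M i (nat (int n - 1 + 1)) (rho c M i (nat (int n - 1 + 1)))
       (restrict \<eta> (Vball i (int n - 1))))) a = qf c M i n (rho c M i n) \<eta> a"
      using pmf_Pm[of i n "restrict \<eta> (VV i n)" a] e3 by (simp add: VV_def)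
    then show ?thesis by (simp add: lam_eq t_def)
  qed
  have tnn: "0 \<le> t n" for n
  proof -
    have "0 \<le> (al c M i n - alp c M i n) * qf c M i n (rho c M i n) \<eta> a"
      using alp_le_al[of i n] qf_ok(1)[of i n \<eta> a] by simp
    then show ?thesis using Mpos[of i] by (simp add: t_def)
  qed
  have "t sums (c i a \<eta> / M i)"
    unfolding sums_def
  proof -
    have "(\<Sum>n<N. t n) = rho c M i N \<eta> a / M i" for N
    proof -
      have "(\<Sum>n<N. rho c M i (Suc n) \<eta> a - rho c M i n \<eta> a) = rho c M i N \<eta> a - rho c M i 0 \<eta> a"
        by (rule sum_lessThan_telescope)
      then show ?thesis unfolding t_def sum_divide_distrib[symmetric] by simp
    qed
    moreover have "(\<lambda>N. rho c M i N \<eta> a / M i) \<longlonglongrightarrow> c i a \<eta> / M i"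
      by (rule tendsto_divide[OF rho_lim tendsto_const]) (use Mpos[of i] in simp)
    ultimately show "(\<lambda>N. \<Sum>n<N. t n) \<longlonglongrightarrow> c i a \<eta> / M i" by simp
  qed
  then have H: "(t has_sum (c i a \<eta> / M i)) UNIV"
    by (rule sums_nonneg_imp_has_sum) (rule tnn)
  have "((\<lambda>k. lam c M i k * pmf (embed_pmf (qf c M i (nat (k+1)) (rho c M i (nat (k+1))) (restrict \<eta> (Vball i k)))) a)
      has_sum (c i a \<eta> / M i)) {-1..} = (t has_sum (c i a \<eta> / M i)) UNIV"
  proof (rule has_sum_reindex_bij_witness[where i="\<lambda>n. int n - 1" and j="\<lambda>k. nat (k+1)"])
    fix k :: int assume k: "k \<in> {-1..}"
    show "int (nat (k + 1)) - 1 = k" using k by simp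
    show "nat (k + 1) \<in> UNIV" by simp
    have "k = int (nat (k+1)) - 1" using k by simp
    then show "t (nat (k + 1)) = lam c M i k * pmf (embed_pmf (qf c M i (nat (k+1)) (rho c M i (nat (k+1))) (restrict \<eta> (Vball i k)))) a"
      using tm[of "nat (k+1)"] by metis
  qed auto
  with H show ?thesis by simp
qed

end

theorem theorem1:
  fixes c :: "int ^ 'd \<Rightarrow> 'a::finite \<Rightarrow> (int ^ 'd \<Rightarrow> 'a) \<Rightarrow> real"
    and M \<Gamma> :: "int ^ 'd \<Rightarrow> real"
  assumes pos: "\<And>i a \<eta>. a \<noteq> \<eta> i \<Longrightarrow> 0 < c i a \<eta>"
    and bdd: "\<And>i a \<eta>. a \<noteq> \<eta> i \<Longrightarrow> c i a \<eta> \<le> \<Gamma> i"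
    and Mpos: "\<And>i. 0 < M i"
    and Mbound: "\<And>i \<eta>. (\<Sum>a\<in>UNIV - {\<eta> i}. c i a \<eta>) \<le> M i"
    and cdiag: "\<And>i \<eta>. c i (\<eta> i) \<eta> = M i - (\<Sum>a\<in>UNIV - {\<eta> i}. c i a \<eta>)"
    and cont: "\<And>a \<epsilon>. \<epsilon> > 0 \<Longrightarrow> \<exists>K::nat. \<forall>k\<ge>K. \<forall>i \<eta> \<zeta>.
                  (\<forall>j\<in>Vball i (int k). \<eta> j = \<zeta> j) \<longrightarrow> \<bar>c i a \<eta> - c i a \<zeta>\<bar> \<le> \<epsilon>"
    and summ: "\<exists>B::real. \<forall>i.
                  (\<lambda>k. real (card (Vball i k)) * lam c M i k) summable_on {0..}
                \<and> (\<Sum>\<^sub>\<infinity>k\<in>{0..}. real (card (Vball i k)) * lam c M i k) \<le> B"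
  shows "\<exists>P :: int ^ 'd \<Rightarrow> int \<Rightarrow> (int ^ 'd \<Rightarrow> 'a) \<Rightarrow> 'a pmf.
           (\<forall>i a \<eta>. c i a \<eta> = M i * (c i a \<eta> / M i)
              \<and> ((\<lambda>k. lam c M i k * pmf (P i k (restrict \<eta> (Vball i k))) a)
                    has_sum (c i a \<eta> / M i)) {-1..})
         \<and> (\<forall>f \<eta>. cylinder f \<longrightarrow>
              generator c f \<eta> =
                (\<Sum>\<^sub>\<infinity>i. \<Sum>a\<in>UNIV. \<Sum>\<^sub>\<infinity>k\<in>{-1..}.
                   M i * lam c M i k * pmf (P i k (restrict \<eta> (Vball i k))) a
                     * (f (\<eta>(i := a)) - f \<eta>)))"
proof -
  interpret S: sys c M
    by (rule sys.intro[OF pos Mpos Mbound cdiag cont])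
  define P :: "int ^ 'd \<Rightarrow> int \<Rightarrow> (int ^ 'd \<Rightarrow> 'a) \<Rightarrow> 'a pmf" where
    "P i k w = embed_pmf (qf c M i (nat (k+1)) (rho c M i (nat (k+1))) w)" for i k w
  have H: "((\<lambda>k. lam c M i k * pmf (P i k (restrict \<eta> (Vball i k))) a) has_sum (c i a \<eta> / M i)) {-1..}"
    for i a \<eta> unfolding P_def by (rule S.hs)
  have C: "c i a \<eta> = M i * (c i a \<eta> / M i)" for i a \<eta> using Mpos[of i] by simp
  have G: "generator c f \<eta> =
                (\<Sum>\<^sub>\<infinity>i. \<Sum>a\<in>UNIV. \<Sum>\<^sub>\<infinity>k\<in>{-1..}.
                   M i * lam c M i k * pmf (P i k (restrict \<eta> (Vball i k))) a
                     * (f (\<eta>(i := a)) - f \<eta>))" for f \<eta>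
    unfolding generator_def
  proof (rule infsum_cong)
    fix i
    define D where "D a = f (\<eta>(i := a)) - f \<eta>" for a
    have inner: "(\<Sum>\<^sub>\<infinity>k\<in>{-1..}. M i * lam c M i k * pmf (P i k (restrict \<eta> (Vball i k))) a * D a)
        = c i a \<eta> * D a" for a
    proof -
      have "((\<lambda>k. (M i * D a) * (lam c M i k * pmf (P i k (restrict \<eta> (Vball i k))) a))
          has_sum ((M i * D a) * (c i a \<eta> / M i))) {-1..}"
        by (rule has_sum_cmult_right[OF H])
      moreover have "(M i * D a) * (c i a \<eta> / M i) = c i a \<eta> * D a" using Mpos[of i] by simp
      ultimately have "((\<lambda>k. M i * lam c M i k * pmf (P i k (restrict \<eta> (Vball i k))) a * D a)
          has_sum (c i a \<eta> * D a)) {-1..}" by (simp add: ac_simps)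
      then show ?thesis by (rule infsumI)
    qed
    have "(\<Sum>a\<in>UNIV. c i a \<eta> * D a) = c i (\<eta> i) \<eta> * D (\<eta> i) + (\<Sum>a\<in>UNIV - {\<eta> i}. c i a \<eta> * D a)"
      by (simp add: sum.remove)
    moreover have "D (\<eta> i) = 0" by (simp add: D_def)
    ultimately show "(\<Sum>a\<in>UNIV - {\<eta> i}. c i a \<eta> * (f (\<eta>(i := a)) - f \<eta>)) =
        (\<Sum>a\<in>UNIV. \<Sum>\<^sub>\<infinity>k\<in>{-1..}. M i * lam c M i k * pmf (P i k (restrict \<eta> (Vball i k))) a * (f (\<eta>(i := a)) - f \<eta>))"
      using inner by (simp add: D_def)
  qed
  show ?thesis
    apply (rule exI[of _ P])
    apply (intro conjI allI impI)
      apply (rule C)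
     apply (rule H)
    apply (rule G)
    done
qed

end
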